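(* Let $x_0\in\mathbb{R}$ with $x_0\neq1$, let $\alpha>1$ and let \[ 0<T^*<\frac{\alpha-1}{\alpha(1+\alpha|x_0|)}. \] Then there exists a solution $x\in C^1([0,T^*])$ of the problem \[ \dot x(t)=x(t)-\max_{s\in[0,t]}x^2(s),\quad t\in[0,T^*],\qquad x(0)=x_0. \] *)

theory Defs
  imports "HOL-Analysis.Analysis"
begin

end

theory Submission
  imports Defs
begin

lemma exp_bound:
  fixes a :: real assumes a: "a > 0"
  shows "exp (1/(1+a)) \<le> 1 + 1/a"
proof -
  have h: "a/(1+a) \<le> exp (-(1/(1+a)))"
    using exp_ge_add_one_self[of "-(1/(1+a))"] a by (simp add: field_simps)
  have "exp (1/(1+a)) = 1 / exp (-(1/(1+a)))" by (simp add: exp_minus divide_inverse)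
  also have "\<dots> \<le> 1 / (a/(1+a))"
    using h a by (intro divide_left_mono) auto
  also have "\<dots> = 1 + 1/a" using a by (simp add: field_simps)
  finally show ?thesis .
qed

lemma T_bound:
  fixes x0 \<alpha> T :: real
  assumes "\<alpha> > 1" and "T < (\<alpha> - 1) / (\<alpha> * (1 + \<alpha> * \<bar>x0\<bar>))"
  shows "T < 1 / (1 + \<bar>x0\<bar>)"
proof -
  have p1: "\<alpha> * (1 + \<alpha> * \<bar>x0\<bar>) > 0" using assms by (simp add: add_pos_nonneg)
  have "(\<alpha> - 1) * (1 + \<bar>x0\<bar>) \<le> \<alpha> * (1 + \<alpha> * \<bar>x0\<bar>)"
  proof -
    have "\<alpha> * \<bar>x0\<bar> \<le> \<alpha> * \<alpha> * \<bar>x0\<bar>" using assms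
      by (simp add: mult_right_mono)
    thus ?thesis by (simp add: algebra_simps)
  qed
  hence "(\<alpha> - 1) / (\<alpha> * (1 + \<alpha> * \<bar>x0\<bar>)) \<le> 1 / (1 + \<bar>x0\<bar>)"
    using p1 by (simp add: divide_simps add_pos_nonneg)
  thus ?thesis using assms by linarith
qed

theorem mainTheorem2:
  fixes x0 \<alpha> T :: real
  assumes "x0 \<noteq> 1" and "\<alpha> > 1"
    and "0 < T" and "T < (\<alpha> - 1) / (\<alpha> * (1 + \<alpha> * \<bar>x0\<bar>))"
  shows "\<exists>x x' :: real \<Rightarrow> real.
           (\<forall>t\<in>{0..T}. (x has_real_derivative x' t) (at t within {0..T}))
         \<and> continuous_on {0..T} x'
         \<and> (\<forall>t\<in>{0..T}. x' t = x t - (SUP s\<in>{0..t}. (x s)\<^sup>2))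
         \<and> x 0 = x0"
proof -
  have TB: "T < 1 / (1 + \<bar>x0\<bar>)" using T_bound assms(2,4) by blast
  show ?thesis
  proof (cases "x0 < 1")
    case True
    define d where "d = (\<lambda>t. x0 + (1 - x0) * exp (-t))"
    define x where "x = (\<lambda>t. x0 / d t)"
    define x' where "x' = (\<lambda>t. x0 * (1 - x0) * exp (-t) / (d t)\<^sup>2)"
    have dpos: "d t > 0" if "t \<in> {0..T}" for t
    proof (cases "x0 \<ge> 0")
      case True
      then show ?thesis using \<open>x0 < 1\<close> unfolding d_def
        by (simp add: add_nonneg_pos)
    next
      case False
      let ?a = "-x0"
      have a: "?a > 0" using False by simp
      have "exp t \<le> exp T" using that by simp
      also have "exp T < exp (1/(1+?a))" using TB False by simp
      also have "\<dots> \<le> 1 + 1/?a" by (rule exp_bound[OF a])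
      finally have e: "exp t < 1 + 1/?a" .
      have "exp t * ?a < ?a + 1" using e a by (simp add: field_simps)
      hence "0 < x0 * exp t + (1 - x0)" by (simp add: algebra_simps)
      hence "0 < exp (-t) * (x0 * exp t + (1 - x0))" by simp
      thus ?thesis unfolding d_def by (simp add: algebra_simps exp_minus)
    qed
    have dmono: "d t \<le> d s" if "s \<le> t" for s t
      unfolding d_def using that \<open>x0 < 1\<close> by (simp add: mult_left_mono)
    have deriv: "(x has_real_derivative x' t) (at t)" if "t \<in> {0..T}" for t
    proof -
      have "(d has_real_derivative (- (1 - x0) * exp (-t))) (at t)"
        unfolding d_def by (auto intro!: derivative_eq_intros simp: algebra_simps)
      hence "(x has_real_derivative (- x0 * (- (1 - x0) * exp (-t)) / (d t)\<^sup>2)) (at t)"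
        unfolding x_def using dpos[OF that]
        by (auto intro!: derivative_eq_intros simp: power2_eq_square)
      thus ?thesis unfolding x'_def by (simp add: algebra_simps)
    qed
    show ?thesis
    proof (intro exI conjI ballI)
      fix t assume t: "t \<in> {0..T}"
      show "(x has_real_derivative x' t) (at t within {0..T})"
        using deriv[OF t] by (rule has_field_derivative_at_within)
    next
      show "continuous_on {0..T} x'" unfolding x'_def
        using dpos by (auto intro!: continuous_intros simp: d_def) (metis atLeastAtMost_iff less_irrefl)
    next
      fix t assume t: "t \<in> {0..T}"
      have sup: "(SUP s\<in>{0..t}. (x s)\<^sup>2) = (x t)\<^sup>2"
      proof (rule cSup_eq_maximum)
        show "(x t)\<^sup>2 \<in> (\<lambda>s. (x s)\<^sup>2) ` {0..t}" using t by auto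
      next
        fix y assume "y \<in> (\<lambda>s. (x s)\<^sup>2) ` {0..t}"
        then obtain s where s: "s \<in> {0..t}" "y = (x s)\<^sup>2" by auto
        have sT: "s \<in> {0..T}" using s t by auto
        have "d t \<le> d s" using s by (intro dmono) auto
        hence "(d t)\<^sup>2 \<le> (d s)\<^sup>2" using dpos[OF t] by (intro power_mono) auto
        hence "x0\<^sup>2 / (d s)\<^sup>2 \<le> x0\<^sup>2 / (d t)\<^sup>2"
          using dpos[OF t] by (intro divide_left_mono) (auto intro!: mult_pos_pos)
        thus "y \<le> (x t)\<^sup>2" unfolding s x_def by (simp add: power_divide)
      qed
      have dt: "d t \<noteq> 0" using dpos[OF t] by simp
      have num: "x0 * (1 - x0) * exp (-t) = x0 * d t - x0\<^sup>2"
        unfolding d_def by (simp add: algebra_simps power2_eq_square)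
      have "x' t = (x0 * d t - x0\<^sup>2) / (d t)\<^sup>2" unfolding x'_def num ..
      also have "\<dots> = x t - (x t)\<^sup>2" unfolding x_def using dt
        by (simp add: field_simps power2_eq_square)
      finally have "x' t = x t - (x t)\<^sup>2" .
      thus "x' t = x t - (SUP s\<in>{0..t}. (x s)\<^sup>2)" using sup by simp
    next
      show "x 0 = x0" unfolding x_def d_def by simp
    qed
  next
    case False
    hence x1: "x0 > 1" using assms(1) by simp
    define x where "x = (\<lambda>t. x0\<^sup>2 - (x0\<^sup>2 - x0) * exp t)"
    define x' where "x' = (\<lambda>t. - (x0\<^sup>2 - x0) * exp t)"
    have c: "x0\<^sup>2 - x0 > 0" using x1 by (simp add: power2_eq_square)
    show ?thesis
    proof (intro exI conjI ballI)
      fix t assume t: "t \<in> {0..T}"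
      show "(x has_real_derivative x' t) (at t within {0..T})"
        unfolding x_def x'_def by (auto intro!: derivative_eq_intros simp: algebra_simps)
    next
      show "continuous_on {0..T} x'" unfolding x'_def
        by (auto intro!: continuous_intros)
    next
      fix t assume t: "t \<in> {0..T}"
      have sup: "(SUP s\<in>{0..t}. (x s)\<^sup>2) = x0\<^sup>2"
      proof (rule cSup_eq_maximum)
        show "x0\<^sup>2 \<in> (\<lambda>s. (x s)\<^sup>2) ` {0..t}" using t
          by (intro image_eqI[of _ _ 0]) (auto simp: x_def)
      next
        fix y assume "y \<in> (\<lambda>s. (x s)\<^sup>2) ` {0..t}"
        then obtain s where s: "s \<in> {0..t}" "y = (x s)\<^sup>2" by auto
        have a: "x0 > 0" using x1 by simp
        have "exp s \<le> exp T" using s t by simp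
        also have "exp T < exp (1/(1+x0))" using TB x1 by simp
        also have "\<dots> \<le> 1 + 1/x0" by (rule exp_bound[OF a])
        also have "\<dots> \<le> (x0 + 1)/(x0 - 1)" using x1 by (simp add: field_simps)
        finally have "exp s * (x0 - 1) \<le> x0 + 1" using x1 by (simp add: field_simps)
        hence "(x0\<^sup>2 - x0) * exp s \<le> x0\<^sup>2 + x0" using a
          by (simp add: power2_eq_square algebra_simps)
          (metis mult.commute mult_left_mono distrib_left less_eq_real_def mult.right_neutral
            right_diff_distrib)
        hence lo: "- x0 \<le> x s" unfolding x_def by simp
        have "1 \<le> exp s" using s by simp
        hence "(x0\<^sup>2 - x0) * 1 \<le> (x0\<^sup>2 - x0) * exp s" using c by (intro mult_left_mono) auto
        hence hi: "x s \<le> x0" unfolding x_def by simp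
        show "y \<le> x0\<^sup>2" unfolding s using lo hi
          by (simp add: abs_le_iff power2_le_iff_abs_le a less_imp_le)
      qed
      have "x' t = x t - x0\<^sup>2" unfolding x_def x'_def by (simp add: algebra_simps)
      thus "x' t = x t - (SUP s\<in>{0..t}. (x s)\<^sup>2)" using sup by simp
    next
      show "x 0 = x0" unfolding x_def by simp
    qed
  qed
qed

end
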